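(* Let $d\ge 2$ and $\ell\ge 2$. The subKautz digraph $sK(d,\ell)$ has the same girth as the cyclic Kautz digraph $CK(d,\ell+1)$; in particular its girth is at least the smallest positive integer $k$ such that $\ell+1\not\equiv 1\pmod k$ (equivalently, $k\nmid \ell$).
   Context: SubKautz digraph $sK(d,\ell)$: vertices $x_1\ldots x_\ell\in\mathbb Z_{d+1}^\ell$ with $x_i\neq x_{i+1}$; arcs $x_1\ldots x_\ell\to x_2\ldots x_\ell x_{\ell+1}$ for $x_{\ell+1}\neq x_1,x_\ell$. Cyclic Kautz digraph $CK(d,m)$: vertices $x_1\ldots x_m\in\mathbb Z_{d+1}^m$ with $x_i\neq x_{i+1}$ ($1\le i\le m-1$) and $x_m\neq x_1$; arcs $x_1\ldots x_m\to x_2\ldots x_m y$ for $y\neq x_2,x_m$. The girth is the length of a shortest directed cycle. *)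

theory Defs
  imports Main
begin

definition sK_verts :: "nat \<Rightarrow> nat \<Rightarrow> nat list set" where
  "sK_verts d l = {xs. length xs = l \<and> set xs \<subseteq> {0..d} \<and>
      (\<forall>i. Suc i < l \<longrightarrow> xs ! i \<noteq> xs ! Suc i)}"

definition sK_arc :: "nat \<Rightarrow> nat \<Rightarrow> nat list \<Rightarrow> nat list \<Rightarrow> bool" where
  "sK_arc d l xs ys \<longleftrightarrow> xs \<in> sK_verts d l \<and> ys \<in> sK_verts d l \<and>
      (\<exists>y. ys = tl xs @ [y] \<and> y \<noteq> hd xs \<and> y \<noteq> last xs)"

definition CK_verts :: "nat \<Rightarrow> nat \<Rightarrow> nat list set" where
  "CK_verts d m = {xs. length xs = m \<and> set xs \<subseteq> {0..d} \<and>
      (\<forall>i. Suc i < m \<longrightarrow> xs ! i \<noteq> xs ! Suc i) \<and> last xs \<noteq> hd xs}"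

definition CK_arc :: "nat \<Rightarrow> nat \<Rightarrow> nat list \<Rightarrow> nat list \<Rightarrow> bool" where
  "CK_arc d m xs ys \<longleftrightarrow> xs \<in> CK_verts d m \<and> ys \<in> CK_verts d m \<and>
      (\<exists>y. ys = tl xs @ [y] \<and> y \<noteq> xs ! 1 \<and> y \<noteq> last xs)"

definition has_cycle :: "'a set \<Rightarrow> ('a \<Rightarrow> 'a \<Rightarrow> bool) \<Rightarrow> nat \<Rightarrow> bool" where
  "has_cycle V A k \<longleftrightarrow> k \<ge> 1 \<and> (\<exists>f :: nat \<Rightarrow> 'a.
      (\<forall>i<k. f i \<in> V \<and> A (f i) (f (Suc i))) \<and> f k = f 0 \<and> inj_on f {..<k})"

definition girth :: "'a set \<Rightarrow> ('a \<Rightarrow> 'a \<Rightarrow> bool) \<Rightarrow> nat" where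
  "girth V A = (LEAST k. has_cycle V A k)"

end

theory Submission
  imports Defs
begin

definition cw :: "'a set \<Rightarrow> ('a \<Rightarrow> 'a \<Rightarrow> bool) \<Rightarrow> nat \<Rightarrow> bool" where
  "cw V A k \<longleftrightarrow> k \<ge> 1 \<and> (\<exists>f :: nat \<Rightarrow> 'a.
      (\<forall>i<k. f i \<in> V \<and> A (f i) (f (Suc i))) \<and> f k = f 0)"

lemma hc_cw: "has_cycle V A k \<Longrightarrow> cw V A k"
  unfolding has_cycle_def cw_def by blast

lemma cw_hc: "cw V A k \<Longrightarrow> \<exists>j\<le>k. has_cycle V A j"
proof (induction k rule: less_induct)
  case (less k)
  then obtain f where k1: "k \<ge> 1" and f: "\<forall>i<k. f i \<in> V \<and> A (f i) (f (Suc i))" and fk: "f k = f 0"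
    unfolding cw_def by blast
  show ?case
  proof (cases "inj_on f {..<k}")
    case True
    then have "has_cycle V A k" unfolding has_cycle_def using k1 f fk by blast
    then show ?thesis by blast
  next
    case False
    then obtain i j where ij: "i < k" "j < k" "i \<noteq> j" "f i = f j"
      unfolding inj_on_def by auto
    then obtain a b where ab: "a < b" "b < k" "f a = f b"
      by (metis linorder_neqE_nat)
    define g where "g n = f (a + n)" for n
    have "cw V A (b - a)" unfolding cw_def
    proof (intro conjI exI)
      show "1 \<le> b - a" using ab by simp
      show "\<forall>i<b - a. g i \<in> V \<and> A (g i) (g (Suc i))"
        using f ab unfolding g_def by auto
      show "g (b - a) = g 0" using ab unfolding g_def by simp
    qed
    moreover have "b - a < k" using ab by simp
    ultimately obtain j where "j \<le> b - a" "has_cycle V A j" using less.IH by blast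
    then show ?thesis using \<open>b - a < k\<close> by (intro exI[of _ j]) simp
  qed
qed

lemma girth_cw: "girth V A = (LEAST k. cw V A k)"
proof (cases "\<exists>k. cw V A k")
  case True
  define m where "m = (LEAST k. cw V A k)"
  have cm: "cw V A m" unfolding m_def using True by (metis LeastI)
  have mle: "\<And>k. cw V A k \<Longrightarrow> m \<le> k" unfolding m_def by (rule Least_le)
  obtain j where j: "j \<le> m" "has_cycle V A j" using cw_hc[OF cm] by blast
  have "j = m" using mle[OF hc_cw[OF j(2)]] j(1) by simp
  have "(LEAST k. has_cycle V A k) = m"
    by (rule Least_equality) (use j \<open>j = m\<close> mle hc_cw in auto)
  then show ?thesis unfolding girth_def m_def by simp
next
  case False
  then have "has_cycle V A = (\<lambda>k. False)" "cw V A = (\<lambda>k. False)"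
    using hc_cw by blast+
  then show ?thesis unfolding girth_def by simp
qed

lemma cw_per:
  assumes "cw V A k"
  shows "\<exists>f. (\<forall>i. f i \<in> V \<and> A (f i) (f (Suc i))) \<and> (\<forall>i. f (i + k) = f i)"
proof -
  obtain f where k1: "k \<ge> 1" and f: "\<forall>i<k. f i \<in> V \<and> A (f i) (f (Suc i))" and fk: "f k = f 0"
    using assms unfolding cw_def by blast
  define g where "g i = f (i mod k)" for i
  have "\<forall>i. g i \<in> V \<and> A (g i) (g (Suc i))"
  proof
    fix i
    have lt: "i mod k < k" using k1 by simp
    have "g (Suc i) = f (Suc (i mod k))"
      unfolding g_def mod_Suc using fk by auto
    then show "g i \<in> V \<and> A (g i) (g (Suc i))" using f lt unfolding g_def by simp
  qed
  moreover have "\<forall>i. g (i + k) = g i" unfolding g_def by simp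
  ultimately show ?thesis by blast
qed

lemma per_cw:
  assumes "k \<ge> 1" "\<forall>i. f i \<in> V \<and> A (f i) (f (Suc i))" "\<forall>i. f (i + k) = f i"
  shows "cw V A k"
  unfolding cw_def using assms by (metis add_0)



lemma sK_to_CK:
  assumes l2: "l \<ge> 2" and "cw (sK_verts d l) (sK_arc d l) k"
  shows "cw (CK_verts d (l+1)) (CK_arc d (l+1)) k"
proof -
  obtain f where f: "\<And>i. f i \<in> sK_verts d l \<and> sK_arc d l (f i) (f (Suc i))"
    and p: "\<And>i. f (i + k) = f i"
    using cw_per[OF assms(2)] by blast
  have k1: "k \<ge> 1" using assms(2) unfolding cw_def by simp
  have len: "\<And>i. length (f i) = l" using f unfolding sK_verts_def by blast
  have ne: "\<And>i. f i \<noteq> []" using len l2 by (metis list.size(3) not_numeral_le_zero)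
  obtain y where y: "\<And>i. f (Suc i) = tl (f i) @ [y i] \<and> y i \<noteq> hd (f i) \<and> y i \<noteq> last (f i)"
    using f unfolding sK_arc_def by metis
  have ly: "\<And>i. last (f (Suc i)) = y i" using y by simp
  define g where "g i = f i @ [y i]" for i
  have gv: "g i \<in> CK_verts d (l+1)" for i
  proof -
    have "y i \<in> set (f (Suc i))" using y[of i] by simp
    then have yd: "y i \<in> {0..d}" using f[of "Suc i"] unfolding sK_verts_def by blast
    have c: "\<forall>j. Suc j < l \<longrightarrow> f i ! j \<noteq> f i ! Suc j" using f[of i] unfolding sK_verts_def by blast
    have lst: "last (f i) = f i ! (l - 1)" using len[of i] ne[of i] by (simp add: last_conv_nth)
    have "\<forall>j. Suc j < l + 1 \<longrightarrow> g i ! j \<noteq> g i ! Suc j"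
    proof (intro allI impI)
      fix j assume "Suc j < l + 1"
      then consider "Suc j < l" | "j = l - 1" by linarith
      then show "g i ! j \<noteq> g i ! Suc j"
      proof cases
        case 1 then show ?thesis using c len[of i] unfolding g_def by (simp add: nth_append)
      next
        case 2 then show ?thesis using y[of i] lst len[of i] l2 unfolding g_def by (simp add: nth_append)
      qed
    qed
    moreover have "last (g i) \<noteq> hd (g i)" using y[of i] ne[of i] unfolding g_def by simp
    moreover have "set (g i) \<subseteq> {0..d}" using f[of i] yd unfolding g_def sK_verts_def by auto
    moreover have "length (g i) = l + 1" using len unfolding g_def by simp
    ultimately show ?thesis unfolding CK_verts_def by blast
  qed
  have ga: "CK_arc d (l+1) (g i) (g (Suc i))" for i
    unfolding CK_arc_def
  proof (intro conjI gv exI)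
    show "g (Suc i) = tl (g i) @ [y (Suc i)]" using y[of i] ne[of i] unfolding g_def by simp
    have tne: "tl (f i) \<noteq> []" using len[of i] l2 by (cases "f i") auto
    have "hd (f (Suc i)) = f i ! 1" using y[of i] len[of i] l2 tne
      by (simp add: hd_append hd_conv_nth nth_tl)
    moreover have "g i ! 1 = f i ! 1" using len[of i] l2 unfolding g_def by (simp add: nth_append)
    ultimately show "y (Suc i) \<noteq> g i ! 1" using y[of "Suc i"] by simp
    show "y (Suc i) \<noteq> last (g i)" using y[of "Suc i"] ly[of i] unfolding g_def by simp
  qed
  have gp: "g (i + k) = g i" for i
    unfolding g_def using p ly by (metis add_Suc)
  show ?thesis using per_cw[OF k1, of g] gv ga gp by blast
qed



lemma CK_to_sK:
  assumes l2: "l \<ge> 2" and "cw (CK_verts d (l+1)) (CK_arc d (l+1)) k"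
  shows "cw (sK_verts d l) (sK_arc d l) k"
proof -
  obtain g where g: "\<And>i. g i \<in> CK_verts d (l+1) \<and> CK_arc d (l+1) (g i) (g (Suc i))"
    and p: "\<And>i. g (i + k) = g i"
    using cw_per[OF assms(2)] by blast
  have k1: "k \<ge> 1" using assms(2) unfolding cw_def by simp
  have len: "\<And>i. length (g i) = l + 1" using g unfolding CK_verts_def by blast
  have "\<forall>i. \<exists>y. g (Suc i) = tl (g i) @ [y]"
    using g unfolding CK_arc_def by blast
  then obtain y where y: "\<And>i. g (Suc i) = tl (g i) @ [y i]"
    by (metis)
  define f where "f i = butlast (g i)" for i
  have c: "\<And>i j. Suc j < l + 1 \<Longrightarrow> g i ! j \<noteq> g i ! Suc j"
  proof -
    fix i j assume "Suc j < l + 1"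
    moreover have "\<forall>j. Suc j < l + 1 \<longrightarrow> g i ! j \<noteq> g i ! Suc j" using g[of i] unfolding CK_verts_def by blast
    ultimately show "g i ! j \<noteq> g i ! Suc j" by blast
  qed
  have lh: "\<And>i. last (g i) \<noteq> hd (g i)" using g unfolding CK_verts_def by simp
  have fv: "f i \<in> sK_verts d l" for i
  proof -
    have "set (g i) \<subseteq> {0..d}" using g[of i] unfolding CK_verts_def by blast
    then have "set (f i) \<subseteq> {0..d}" unfolding f_def by (auto dest: in_set_butlastD)
    moreover have "\<forall>j. Suc j < l \<longrightarrow> f i ! j \<noteq> f i ! Suc j"
    proof (intro allI impI)
      fix j assume j: "Suc j < l"
      have "f i ! j = g i ! j" "f i ! Suc j = g i ! Suc j"
        using j len[of i] unfolding f_def by (simp_all add: nth_butlast)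
      then show "f i ! j \<noteq> f i ! Suc j" using c[of j i] j by simp
    qed
    moreover have "length (f i) = l" using len unfolding f_def by simp
    ultimately show ?thesis unfolding sK_verts_def by blast
  qed
  have fa: "sK_arc d l (f i) (f (Suc i))" for i
    unfolding sK_arc_def
  proof (intro conjI fv exI)
    have gne: "g i \<noteq> []" using len[of i] by (cases "g i") auto
    have "length (butlast (g i)) = l" using len[of i] by simp
    then have ne: "butlast (g i) \<noteq> []" using l2 by (cases "butlast (g i)") auto
    have "f (Suc i) = tl (g i)" unfolding f_def y by simp
    also have "\<dots> = tl (butlast (g i) @ [last (g i)])"
      using gne by simp
    also have "\<dots> = tl (f i) @ [last (g i)]" using ne unfolding f_def by simp
    finally show "f (Suc i) = tl (f i) @ [last (g i)]" .
    have "hd (f i) = hd (g i)" using ne unfolding f_def using gne by (metis append_butlast_last_id hd_append2)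
    then show "last (g i) \<noteq> hd (f i)" using lh by simp
    have "last (f i) = g i ! (l - 1)" using ne len[of i] l2 unfolding f_def
      by (simp add: last_conv_nth nth_butlast)
    moreover have "last (g i) = g i ! l" using len[of i] gne by (simp add: last_conv_nth)
    moreover have "g i ! (l - 1) \<noteq> g i ! Suc (l - 1)" using c[of "l - 1" i] l2 by simp
    ultimately show "last (g i) \<noteq> last (f i)" using l2 by (simp add: Suc_diff_1)
  qed
  have fp: "f (i + k) = f i" for i unfolding f_def using p by simp
  show ?thesis using per_cw[OF k1, of f] fv fa fp by blast
qed



lemma sK_nodvd:
  assumes l2: "l \<ge> 2" and "cw (sK_verts d l) (sK_arc d l) k"
  shows "\<not> k dvd l"
proof
  assume kd: "k dvd l"
  obtain f where f: "\<And>i. f i \<in> sK_verts d l \<and> sK_arc d l (f i) (f (Suc i))"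
    and p: "\<And>i. f (i + k) = f i"
    using cw_per[OF assms(2)] by blast
  have len: "\<And>i. length (f i) = l" using f unfolding sK_verts_def by blast
  have "\<forall>i. \<exists>y. f (Suc i) = tl (f i) @ [y] \<and> y \<noteq> hd (f i) \<and> y \<noteq> last (f i)"
    using f unfolding sK_arc_def by blast
  then obtain y where y: "\<And>i. f (Suc i) = tl (f i) @ [y i] \<and> y i \<noteq> hd (f i) \<and> y i \<noteq> last (f i)"
    by metis
  have sh: "\<And>m. m + j < l \<Longrightarrow> f (i + j) ! m = f i ! (m + j)" for i j
  proof (induction j)
    case 0 then show ?case by simp
  next
    case (Suc j)
    have ml: "m < l - 1" using Suc.prems by simp
    have "f (i + Suc j) ! m = (tl (f (i + j)) @ [y (i + j)]) ! m" using y[of "i + j"] by simp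
    also have "\<dots> = tl (f (i + j)) ! m" using ml len[of "i + j"] by (simp add: nth_append)
    also have "\<dots> = f (i + j) ! Suc m" using Suc.prems len[of "i + j"] by (simp add: nth_tl)
    also have "\<dots> = f i ! (Suc m + j)" using Suc.IH[of "Suc m"] Suc.prems by simp
    finally show ?case by simp
  qed
  have per: "f (c * k) = f 0" for c
  proof (induction c)
    case 0 then show ?case by simp
  next
    case (Suc c) then show ?case using p[of "c * k"] by (simp add: add.commute)
  qed
  obtain c where "l = k * c" using kd by blast
  then have fl: "f l = f 0" using per[of c] by (simp add: mult.commute)
  have ne: "f 1 \<noteq> []" "f 0 \<noteq> []" using len[of 1] len[of 0] l2 by auto
  have "f (1 + (l - 1)) ! 0 = f 1 ! (0 + (l - 1))" using sh[of 0 "l - 1" 1] l2 by simp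
  then have "f l ! 0 = last (f 1)" using l2 len[of 1] ne by (simp add: last_conv_nth)
  also have "last (f 1) = y 0" using y[of 0] by simp
  finally have "hd (f 0) = y 0" using fl ne by (simp add: hd_conv_nth)
  then show False using y[of 0] by simp
qed

definition zz :: "nat \<Rightarrow> nat \<Rightarrow> nat" where
  "zz l j = (if j mod (l+1) = l then 2 else j mod (l+1) mod 2)"

lemma zz_suc: "l \<ge> 2 \<Longrightarrow> zz l (Suc j) \<noteq> zz l j"
proof -
  assume l2: "l \<ge> 2"
  have r: "j mod (l+1) < l+1" by simp
  show ?thesis
  proof (cases "j mod (l+1) = l")
    case True
    then have "Suc j mod (l+1) = 0" by (simp add: mod_Suc)
    then show ?thesis using True l2 unfolding zz_def by simp
  next
    case False
    then have s: "Suc j mod (l+1) = Suc (j mod (l+1))" using r by (simp add: mod_Suc)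
    show ?thesis
    proof (cases "Suc (j mod (l+1)) = l")
      case True then show ?thesis using s False unfolding zz_def by simp
    next
      case False2: False
      have ne2: "\<And>r::nat. Suc r mod 2 \<noteq> r mod 2" by presburger
      then show ?thesis using s False False2 unfolding zz_def by simp
    qed
  qed
qed

lemma zz_per: "zz l (j + (l + 1)) = zz l j"
  unfolding zz_def by (simp only: mod_add_self2)

lemma zz_l: "l \<ge> 2 \<Longrightarrow> zz l (j + l) \<noteq> zz l j"
proof -
  assume l2: "l \<ge> 2"
  have e: "Suc (j + l) = j + (l + 1)" by simp
  have "zz l (Suc (j + l)) = zz l j" unfolding e by (rule zz_per)
  then show ?thesis using zz_suc[OF l2, of "j + l"] by simp
qed


lemma sK_exists:
  assumes l2: "l \<ge> 2" and d2: "d \<ge> 2"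
  shows "cw (sK_verts d l) (sK_arc d l) (l + 1)"
proof -
  define f where "f i = map (\<lambda>t. zz l (i + t)) [0..<l]" for i
  have zd: "zz l j \<in> {0..d}" for j using d2 unfolding zz_def by auto
  have fv: "f i \<in> sK_verts d l" for i
  proof -
    have "\<forall>j. Suc j < l \<longrightarrow> f i ! j \<noteq> f i ! Suc j"
    proof (intro allI impI)
      fix j assume "Suc j < l"
      then have "f i ! j = zz l (i + j)" "f i ! Suc j = zz l (Suc (i + j))" unfolding f_def by simp_all
      then show "f i ! j \<noteq> f i ! Suc j" using zz_suc[OF l2, of "i + j"] by simp
    qed
    moreover have "set (f i) \<subseteq> {0..d}" using zd unfolding f_def by auto
    moreover have "length (f i) = l" unfolding f_def by simp
    ultimately show ?thesis unfolding sK_verts_def by blast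
  qed
  have hd: "hd (f i) = zz l i" for i using l2 unfolding f_def by (simp add: hd_map hd_upt)
  have lst: "last (f i) = zz l (i + (l - 1))" for i using l2 unfolding f_def by (simp add: last_map)
  have fa: "sK_arc d l (f i) (f (Suc i))" for i
    unfolding sK_arc_def
  proof (intro conjI fv exI)
    show "f (Suc i) = tl (f i) @ [zz l (i + l)]"
    proof (rule nth_equalityI)
      show "length (f (Suc i)) = length (tl (f i) @ [zz l (i + l)])" using l2 unfolding f_def by simp
      fix n assume "n < length (f (Suc i))"
      then have n: "n < l" unfolding f_def by simp
      show "f (Suc i) ! n = (tl (f i) @ [zz l (i + l)]) ! n"
      proof (cases "n < l - 1")
        case True
        then have "Suc n < l" by simp
        then show ?thesis using n True unfolding f_def by (simp add: nth_append nth_tl)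
      next
        case False then have "n = l - 1" using n by simp
        then show ?thesis using l2 unfolding f_def by (simp add: nth_append)
      qed
    qed
    show "zz l (i + l) \<noteq> hd (f i)" using hd zz_l[OF l2] by simp
    have "zz l (i + l) = zz l (Suc (i + (l - 1)))" using l2 by simp
    then show "zz l (i + l) \<noteq> last (f i)" using lst zz_suc[OF l2] by simp
  qed
  have fp: "f (i + (l + 1)) = f i" for i
  proof -
    have "\<And>t. zz l (i + (l + 1) + t) = zz l (i + t)"
      using zz_per[of l] by (metis add.assoc add.commute)
    then show ?thesis unfolding f_def by simp
  qed
  show ?thesis using per_cw[of "l+1" f] fv fa fp by simp
qed

theorem mainTheorem11:
  fixes d l :: nat
  assumes "d \<ge> 2" and "l \<ge> 2"
  shows "girth (sK_verts d l) (sK_arc d l) = girth (CK_verts d (l + 1)) (CK_arc d (l + 1))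
       \<and> girth (sK_verts d l) (sK_arc d l) \<ge> (LEAST k::nat. 0 < k \<and> \<not> k dvd l)"
proof
  have e: "cw (sK_verts d l) (sK_arc d l) = cw (CK_verts d (l+1)) (CK_arc d (l+1))"
    using sK_to_CK[OF assms(2)] CK_to_sK[OF assms(2)] by blast
  show "girth (sK_verts d l) (sK_arc d l) = girth (CK_verts d (l + 1)) (CK_arc d (l + 1))"
    unfolding girth_cw e ..
  define m where "m = (LEAST k. cw (sK_verts d l) (sK_arc d l) k)"
  have cm: "cw (sK_verts d l) (sK_arc d l) m"
    unfolding m_def using sK_exists[OF assms(2) assms(1)] by (rule LeastI)
  have "0 < m" using cm unfolding cw_def by simp
  moreover have "\<not> m dvd l" using sK_nodvd[OF assms(2) cm] .
  ultimately have "(LEAST k::nat. 0 < k \<and> \<not> k dvd l) \<le> m" by (intro Least_le) simp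
  then show "girth (sK_verts d l) (sK_arc d l) \<ge> (LEAST k::nat. 0 < k \<and> \<not> k dvd l)"
    unfolding girth_cw m_def .
qed

end
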